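(* Let the unperturbed dynamics (rates $W$) on the finite set $K$ be irreducible with unique stationary distribution $\rho$. For functions $V,M:K\to\mathbb{R}$, constants $a,b\in\mathbb{R}$ and small $h\in\mathbb{R}$, let $\rho^V=\rho^V_{h}$ be the unique stationary distribution of the dynamics with rates $W(x,y)e^{h(bV(y)-aV(x))}$, and let $\rho^M$ be the unique stationary distribution of the dynamics with rates $W(x,y)e^{h(aM(y)-bM(x))}$ (roles of $a$ and $b$ interchanged). Define \[ \chi^{ab}_{MV}=\frac{d}{dh}\Big|_{h=0}\sum_x\rho^V(x)\,LM(x),\qquad \chi^{ba}_{VM}=\frac{d}{dh}\Big|_{h=0}\sum_x\rho^M(x)\,LV(x). \] Then \[ \chi^{ab}_{MV}=\chi^{ba}_{VM}=b\,\langle M\,LV\rangle_\rho+a\,\langle V\,LM\rangle_\rho, \] where $\langle F\rangle_\rho=\sum_x\rho(x)F(x)$.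
   Context: $W(x,y)\ge0$ ($x\ne y\in K$) are transition rates on a finite set $K$ and $Lf(x)=\sum_yW(x,y)[f(y)-f(x)]$ is the backward generator of the unperturbed dynamics. *)

theory Defs
  imports "HOL-Analysis.Analysis"
begin

text \<open>Continuous-time Markov jump dynamics on a finite state type 'k with
transition rates R x y (x \<noteq> y). Diagonal entries play no role.\<close>

definition gen :: "('k::finite \<Rightarrow> 'k \<Rightarrow> real) \<Rightarrow> ('k \<Rightarrow> real) \<Rightarrow> 'k \<Rightarrow> real" where
  "gen R f x = (\<Sum>y\<in>UNIV. R x y * (f y - f x))"

definition irreducible :: "('k::finite \<Rightarrow> 'k \<Rightarrow> real) \<Rightarrow> bool" where
  "irreducible R \<longleftrightarrow> {(x, y). x \<noteq> y \<and> R x y > 0}\<^sup>* = UNIV"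

definition stationary_dist :: "('k::finite \<Rightarrow> 'k \<Rightarrow> real) \<Rightarrow> ('k \<Rightarrow> real) \<Rightarrow> bool" where
  "stationary_dist R p \<longleftrightarrow> (\<forall>x. p x \<ge> 0) \<and> (\<Sum>x\<in>UNIV. p x) = 1 \<and>
     (\<forall>y. (\<Sum>x\<in>UNIV - {y}. p x * R x y) = p y * (\<Sum>z\<in>UNIV - {y}. R y z))"

end

theory Submission
  imports Defs
begin

definition bal :: "('k::finite \<Rightarrow> 'k \<Rightarrow> real) \<Rightarrow> ('k \<Rightarrow> real) \<Rightarrow> 'k \<Rightarrow> real" where
  "bal R v y = (\<Sum>x\<in>UNIV-{y}. v x * R x y) - v y * (\<Sum>z\<in>UNIV-{y}. R y z)"

lemma bal_full: "bal R v y = (\<Sum>x\<in>UNIV. v x * R x y) - v y * (\<Sum>z\<in>UNIV. R y z)"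
  unfolding bal_def by (simp add: sum_diff1 algebra_simps)

lemma bal_sum: "(\<Sum>y\<in>UNIV. bal R v y) = 0"
proof -
  have "(\<Sum>y\<in>UNIV. \<Sum>x\<in>UNIV. v x * R x y) = (\<Sum>x\<in>UNIV. v x * (\<Sum>y\<in>UNIV. R x y))"
    by (subst sum.swap) (simp add: sum_distrib_left)
  then show ?thesis unfolding bal_full by (simp add: sum_subtractf)
qed

lemma bal_lin: "bal R (\<lambda>x. c * v x + d * w x) y = c * bal R v y + d * bal R w y"
  unfolding bal_def by (simp add: sum.distrib sum_distrib_left algebra_simps)

lemma stat_bal: "stationary_dist R p \<Longrightarrow> bal R p y = 0"
  unfolding stationary_dist_def bal_def by simp

lemma gen_sum: assumes "\<And>y. bal R p y = 0" shows "(\<Sum>x\<in>UNIV. p x * gen R f x) = 0"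
proof -
  have b: "(\<Sum>x\<in>UNIV. p x * R x y) = p y * (\<Sum>z\<in>UNIV. R y z)" for y using assms[of y] unfolding bal_full by simp
  have "(\<Sum>x\<in>UNIV. p x * gen R f x) = (\<Sum>x\<in>UNIV. \<Sum>y\<in>UNIV. p x * R x y * f y) - (\<Sum>x\<in>UNIV. p x * f x * (\<Sum>y\<in>UNIV. R x y))"
    unfolding gen_def by (simp add: sum_distrib_left sum_subtractf algebra_simps)
  also have "(\<Sum>x\<in>UNIV. \<Sum>y\<in>UNIV. p x * R x y * f y) = (\<Sum>y\<in>UNIV. f y * (\<Sum>x\<in>UNIV. p x * R x y))"
    by (subst sum.swap) (simp add: sum_distrib_left algebra_simps)
  also have "\<dots> = (\<Sum>x\<in>UNIV. p x * f x * (\<Sum>y\<in>UNIV. R x y))" by (simp add: b algebra_simps)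
  finally show ?thesis by simp
qed

lemma propagate:
  assumes nn: "\<And>x y. x \<noteq> y \<Longrightarrow> R x y \<ge> 0" and irr: "irreducible R"
    and r0: "\<And>x. r x \<ge> 0" and rb: "\<And>y. bal R r y = 0" and ry: "r y = 0"
  shows "r x = 0"
proof -
  have "(x, y) \<in> {(x, y). x \<noteq> y \<and> R x y > 0}\<^sup>*" using irr unfolding irreducible_def by auto
  then show ?thesis
  proof (induction rule: converse_rtrancl_induct)
    case base then show ?case using ry by simp
  next
    case (step x z)
    then have xz: "x \<noteq> z" "R x z > 0" by auto
    have "(\<Sum>w\<in>UNIV-{z}. r w * R w z) = 0" using rb[of z] step.IH unfolding bal_def by simp
    moreover have "\<forall>w\<in>UNIV-{z}. r w * R w z \<ge> 0" using r0 nn by auto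
    ultimately have "\<forall>w\<in>UNIV-{z}. r w * R w z = 0" using sum_nonneg_eq_0_iff[of "UNIV-{z}" "\<lambda>w. r w * R w z"] by simp
    then have "r x * R x z = 0" using xz by auto
    then show ?case using xz by simp
  qed
qed

lemma stat_pos:
  assumes nn: "\<And>x y. x \<noteq> y \<Longrightarrow> R x y \<ge> 0" and irr: "irreducible R"
    and st: "stationary_dist R p"
  shows "p x > 0"
proof (rule ccontr)
  assume "\<not> p x > 0"
  moreover have p0: "\<And>x. p x \<ge> 0" using st unfolding stationary_dist_def by auto
  ultimately have "p x = 0" using p0[of x] by linarith
  then have "\<And>w. p w = 0" using propagate[OF nn irr p0 stat_bal[OF st]] by blast
  then show False using st unfolding stationary_dist_def by simp
qed

lemma ker:
  assumes nn: "\<And>x y. x \<noteq> y \<Longrightarrow> R x y \<ge> 0" and irr: "irreducible R"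
    and st: "stationary_dist R \<rho>" and vb: "\<And>y. bal R v y = 0"
  shows "v x = (\<Sum>w\<in>UNIV. v w) * \<rho> x"
proof -
  have pos: "\<And>x. \<rho> x > 0" using stat_pos[OF nn irr st] .
  define t where "t = Min (range (\<lambda>x. v x / \<rho> x))"
  have "t \<in> range (\<lambda>x. v x / \<rho> x)" unfolding t_def by (rule Min_in) auto
  then obtain x0 where x0: "t = v x0 / \<rho> x0" by auto
  have tle: "t \<le> v x / \<rho> x" for x unfolding t_def by simp
  define r where "r x = 1 * v x + (-t) * \<rho> x" for x
  have r0: "r x \<ge> 0" for x using tle[of x] pos[of x] unfolding r_def by (simp add: field_simps)
  have rb: "bal R r y = 0" for y unfolding r_def[abs_def] bal_lin using vb stat_bal[OF st] by simp
  have "r x0 = 0" using x0 pos[of x0] unfolding r_def by simp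
  then have rz: "\<And>x. r x = 0" using propagate[OF nn irr r0 rb] by blast
  then have vx: "\<And>x. v x = t * \<rho> x" unfolding r_def by (metis add.commute diff_eq_eq diff_zero mult_1 mult_minus_left neg_eq_iff_add_eq_0)
  have "(\<Sum>w\<in>UNIV. v w) = t" using st unfolding stationary_dist_def by (simp add: vx sum_distrib_left[symmetric])
  then show ?thesis using vx by simp
qed

lemma uniq:
  assumes nn: "\<And>x y. x \<noteq> y \<Longrightarrow> R x y \<ge> 0" and irr: "irreducible R"
    and p: "stationary_dist R p" and q: "stationary_dist R q"
  shows "p = q"
proof
  fix x
  have "p x = (\<Sum>w\<in>UNIV. p w) * q x" using ker[OF nn irr q stat_bal[OF p]] .
  then show "p x = q x" using p unfolding stationary_dist_def by simp
qed

definition QT :: "('k::finite \<Rightarrow> 'k \<Rightarrow> real) \<Rightarrow> real^'k^'k" where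
  "QT R = (\<chi> y x. if x = y then - (\<Sum>z\<in>UNIV-{y}. R y z) else R x y)"

lemma sum_if_eq: fixes y :: "'k::finite" shows "(\<Sum>x\<in>UNIV. if x = y then A else B x) = A + (\<Sum>x\<in>UNIV-{y}. B x)"
  by (subst sum.remove[of UNIV y]) auto

lemma QT_mult: "(QT R *v v) $ y = bal R (\<lambda>x. v$x) y"
proof -
  have "(QT R *v v) $ y = (\<Sum>x\<in>UNIV. if x = y then - (\<Sum>z\<in>UNIV-{y}. R y z) * v$y else R x y * v$x)"
    unfolding QT_def matrix_vector_mult_def by (auto intro!: sum.cong)
  also have "\<dots> = bal R (\<lambda>x. v$x) y" unfolding sum_if_eq bal_def by (simp add: algebra_simps)
  finally show ?thesis .
qed

lemma QT_transp_one: "transpose (QT R) *v (vec 1) = 0"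
proof -
  have "(transpose (QT R) *v (vec 1)) $ x = 0" for x
  proof -
    have "(transpose (QT R) *v (vec 1)) $ x = (\<Sum>y\<in>UNIV. if y = x then - (\<Sum>z\<in>UNIV-{x}. R x z) else R x y)"
      unfolding QT_def matrix_vector_mult_def transpose_def by (auto intro!: sum.cong)
    then show ?thesis unfolding sum_if_eq by simp
  qed
  then show ?thesis by (simp add: vec_eq_iff)
qed

lemma ker_nonzero: "\<exists>v. v \<noteq> 0 \<and> QT R *v v = 0"
proof (rule ccontr)
  assume "\<not> ?thesis"
  then have "\<forall>x. QT R *v x = 0 \<longrightarrow> x = 0" by auto
  then obtain B where "B ** QT R = mat 1" using matrix_left_invertible_ker by blast
  then have "QT R ** B = mat 1" using matrix_left_right_inverse by blast
  then have "transpose B ** transpose (QT R) = mat 1" by (metis matrix_transpose_mul transpose_mat)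
  then have "vec 1 = (transpose B ** transpose (QT R)) *v (vec 1)"
    by (simp only: matrix_vector_mul_lid)
  also have "\<dots> = transpose B *v (transpose (QT R) *v (vec 1))"
    by (simp only: matrix_vector_mul_assoc)
  also have "\<dots> = transpose B *v 0" by (simp only: QT_transp_one)
  also have "\<dots> = 0" by (simp only: matrix_vector_mult_0_right)
  finally show False by (simp add: vec_eq_iff)
qed

lemma exist:
  assumes nn: "\<And>x y. x \<noteq> y \<Longrightarrow> R x y \<ge> 0"
  shows "\<exists>p. stationary_dist R p"
proof -
  obtain v where v: "v \<noteq> 0" "QT R *v v = 0" using ker_nonzero by blast
  define w where "w x = \<bar>v$x\<bar>" for x
  have vb: "bal R (\<lambda>x. v$x) y = 0" for y using v(2) QT_mult[of R v y] by simp
  have wge: "bal R w y \<ge> 0" for y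
  proof -
    have "(\<Sum>x\<in>UNIV-{y}. v$x * R x y) = v$y * (\<Sum>z\<in>UNIV-{y}. R y z)" using vb[of y] unfolding bal_def by simp
    moreover have out0: "(\<Sum>z\<in>UNIV-{y}. R y z) \<ge> 0" by (rule sum_nonneg) (auto intro: nn)
    ultimately have "\<bar>v$y\<bar> * (\<Sum>z\<in>UNIV-{y}. R y z) = \<bar>\<Sum>x\<in>UNIV-{y}. v$x * R x y\<bar>"
      by (simp add: abs_mult)
    also have "\<dots> \<le> (\<Sum>x\<in>UNIV-{y}. \<bar>v$x * R x y\<bar>)" by (rule sum_abs)
    also have "\<dots> = (\<Sum>x\<in>UNIV-{y}. w x * R x y)" unfolding w_def
      by (intro sum.cong) (auto simp: abs_mult nn)
    finally show ?thesis unfolding bal_def w_def by simp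
  qed
  have w0: "bal R w y = 0" for y
    using sum_nonneg_eq_0_iff[of UNIV "bal R w"] wge bal_sum[of R w] by auto
  obtain x0 where "v$x0 \<noteq> 0" using v(1) by (auto simp: vec_eq_iff)
  then have spos: "(\<Sum>x\<in>UNIV. w x) > 0" unfolding w_def
    by (metis (no_types, lifting) abs_ge_zero abs_not_less_zero finite UNIV_I sum_pos2 zero_less_abs_iff)
  define p where "p x = (1 / (\<Sum>x\<in>UNIV. w x)) * w x + 0 * w x" for x
  have "bal R p y = 0" for y unfolding p_def[abs_def] bal_lin w0 by simp
  moreover have "p x \<ge> 0" for x using spos unfolding p_def w_def by simp
  moreover have "(\<Sum>x\<in>UNIV. p x) = 1" using spos unfolding p_def by (simp add: sum_divide_distrib[symmetric])
  ultimately have "stationary_dist R p" unfolding stationary_dist_def bal_def by simp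
  then show ?thesis by blast
qed

lemma ex1:
  assumes nn: "\<And>x y. x \<noteq> y \<Longrightarrow> R x y \<ge> 0" and irr: "irreducible R"
  shows "\<exists>!p. stationary_dist R p"
proof -
  obtain p where "stationary_dist R p" using exist[of R, OF nn] by blast
  then show ?thesis using uniq[OF nn irr] by blast
qed

definition AT :: "('k::finite \<Rightarrow> 'k \<Rightarrow> real) \<Rightarrow> 'k \<Rightarrow> real^'k^'k" where
  "AT R j0 = (\<chi> j x. if j = j0 then 1 else QT R $ j $ x)"

lemma AT_mult: "(AT R j0 *v v) $ j = (if j = j0 then (\<Sum>x\<in>UNIV. v$x) else bal R (\<lambda>x. v$x) j)"
  using QT_mult[of R v j] unfolding AT_def by (simp add: matrix_vector_mult_def)

lemma AT_inv:
  assumes nn: "\<And>x y. x \<noteq> y \<Longrightarrow> R x y \<ge> 0" and irr: "irreducible R"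
    and st: "stationary_dist R \<rho>"
  shows "\<exists>B. B ** AT R j0 = mat 1"
proof -
  have "v = 0" if v: "AT R j0 *v v = 0" for v
  proof -
    have b: "bal R (\<lambda>x. v$x) j = 0" if "j \<noteq> j0" for j using arg_cong[OF v, of "\<lambda>u. u$j"] that
      by (simp add: AT_mult)
    have s: "(\<Sum>x\<in>UNIV. v$x) = 0" using arg_cong[OF v, of "\<lambda>u. u$j0"] by (simp add: AT_mult)
    have "(\<Sum>j\<in>UNIV. bal R (\<lambda>x. v$x) j) = bal R (\<lambda>x. v$x) j0 + (\<Sum>j\<in>UNIV-{j0}. bal R (\<lambda>x. v$x) j)"
      by (subst sum.remove[of UNIV j0]) auto
    also have "(\<Sum>j\<in>UNIV-{j0}. bal R (\<lambda>x. v$x) j) = 0" using b by (intro sum.neutral) auto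
    finally have "bal R (\<lambda>x. v$x) j0 = 0" using bal_sum[of R "\<lambda>x. v$x"] by simp
    then have "bal R (\<lambda>x. v$x) j = 0" for j using b by (cases "j = j0") auto
    then have "v$x = 0" for x using ker[OF nn irr st, of "\<lambda>x. v$x" x] s by simp
    then show ?thesis by (simp add: vec_eq_iff)
  qed
  then show ?thesis using matrix_left_invertible_ker by blast
qed

lemma bounded_mult_zero:
  assumes a: "\<And>h. \<bar>a h\<bar> \<le> 1" and b: "(b \<longlongrightarrow> (0::real)) F"
  shows "((\<lambda>h. a h * b h) \<longlongrightarrow> 0) F"
proof (rule Lim_null_comparison[where g="\<lambda>h. \<bar>b h\<bar>"])
  show "\<forall>\<^sub>F h in F. norm (a h * b h) \<le> \<bar>b h\<bar>"
    using a by (auto simp: abs_mult intro!: mult_left_le_one_le always_eventually)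
  show "((\<lambda>h. \<bar>b h\<bar>) \<longlongrightarrow> 0) F" using tendsto_rabs_zero[OF b] .
qed

lemma stat_le1: "stationary_dist R p \<Longrightarrow> \<bar>p x\<bar> \<le> 1"
  unfolding stationary_dist_def
  by (metis abs_of_nonneg finite UNIV_I member_le_sum)

lemma cont:
  fixes R :: "'k::finite \<Rightarrow> 'k \<Rightarrow> real"
  assumes nn: "\<And>x y. x \<noteq> y \<Longrightarrow> R x y \<ge> 0" and irr: "irreducible R"
    and st: "stationary_dist R \<rho>"
    and Rlim: "\<And>x y. ((\<lambda>h. Rh h x y) \<longlongrightarrow> R x y) F"
    and pst: "\<And>h. stationary_dist (Rh h) (p h)"
  shows "((\<lambda>h. p h i) \<longlongrightarrow> \<rho> i) F"
proof -
  fix j0 :: 'k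
  obtain B where B: "B ** AT R j0 = mat 1" using AT_inv[OF nn irr st] by blast
  define d where "d h = (\<chi> x. p h x - \<rho> x)" for h
  have dB: "d h = B *v (AT R j0 *v d h)" for h
    by (simp only: matrix_vector_mul_assoc B matrix_vector_mul_lid)
  have blin: "bal R (\<lambda>x. d h $ x) j = bal R (p h) j - bal R \<rho> j" for h j
    using bal_lin[of R 1 "p h" "-1" \<rho> j] unfolding d_def by simp
  have Ad: "(AT R j0 *v d h) $ j = (if j = j0 then 0 else
        (\<Sum>x\<in>UNIV-{j}. p h x * (R x j - Rh h x j)) - p h j * (\<Sum>z\<in>UNIV-{j}. (R j z - Rh h j z)))" for h j
  proof (cases "j = j0")
    case True
    then show ?thesis using pst[of h] st unfolding AT_mult d_def stationary_dist_def by (simp add: sum_subtractf)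
  next
    case False
    have "bal (Rh h) (p h) j = 0" using stat_bal[OF pst] .
    then show ?thesis using False unfolding AT_mult blin stat_bal[OF st]
      by (simp add: bal_def sum_subtractf right_diff_distrib sum.distrib)
  qed
  have lim0: "((\<lambda>h. (AT R j0 *v d h) $ j) \<longlongrightarrow> 0) F" for j
  proof (cases "j = j0")
    case True then show ?thesis unfolding Ad by simp
  next
    case False
    have r: "((\<lambda>h. R x y - Rh h x y) \<longlongrightarrow> 0) F" for x y
      using tendsto_diff[OF tendsto_const[of "R x y"] Rlim[of x y]] by simp
    have "((\<lambda>h. (\<Sum>x\<in>UNIV-{j}. p h x * (R x j - Rh h x j))) \<longlongrightarrow> 0) F"
      by (intro tendsto_null_sum bounded_mult_zero stat_le1[OF pst] r)
    moreover have "((\<lambda>h. p h j * (\<Sum>z\<in>UNIV-{j}. (R j z - Rh h j z))) \<longlongrightarrow> 0) F"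
      by (intro tendsto_null_sum bounded_mult_zero stat_le1[OF pst] r)
    ultimately show ?thesis unfolding Ad using False tendsto_diff by fastforce
  qed
  have "((\<lambda>h. d h $ i) \<longlongrightarrow> 0) F"
  proof -
    have "d h $ i = (\<Sum>j\<in>UNIV. B $ i $ j * (AT R j0 *v d h) $ j)" for h
      by (subst dB) (simp add: matrix_vector_mult_def)
    moreover have "((\<lambda>h. \<Sum>j\<in>UNIV. B $ i $ j * (AT R j0 *v d h) $ j) \<longlongrightarrow> 0) F"
      by (intro tendsto_null_sum tendsto_mult_right_zero lim0)
    ultimately show ?thesis by simp
  qed
  then show ?thesis unfolding d_def by (simp add: LIM_zero_iff)
qed

lemma exp_quot: "((\<lambda>h. (1 - exp (h * c)) / h) \<longlongrightarrow> - (c::real)) (at 0)"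
proof -
  have "((\<lambda>h. exp (h * c)) has_real_derivative exp (0 * c) * c) (at 0)"
    by (auto intro!: derivative_eq_intros)
  then have "((\<lambda>h. (exp (h * c) - exp (0 * c)) / (h - 0)) \<longlongrightarrow> c) (at 0)"
    unfolding has_field_derivative_iff by simp
  then have "((\<lambda>h. - ((exp (h * c) - 1) / h)) \<longlongrightarrow> - c) (at 0)"
    by (intro tendsto_minus) simp
  then show ?thesis by (simp add: minus_divide_left)
qed

lemma main:
  fixes W :: "'k::finite \<Rightarrow> 'k \<Rightarrow> real" and c :: "'k \<Rightarrow> 'k \<Rightarrow> real"
  assumes nn: "\<And>x y. x \<noteq> y \<Longrightarrow> W x y \<ge> 0" and irr: "irreducible W"
    and st: "stationary_dist W \<rho>"
  shows "((\<lambda>h. \<Sum>x\<in>UNIV. (THE p. stationary_dist (\<lambda>x y. W x y * exp (h * c x y)) p) x * gen W M x)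
     has_real_derivative (\<Sum>x\<in>UNIV. \<rho> x * (\<Sum>y\<in>UNIV. W x y * (- c x y) * (M y - M x)))) (at 0)"
proof -
  define Rh where "Rh h = (\<lambda>x y. W x y * exp (h * c x y))" for h
  define P where "P h = (THE p. stationary_dist (Rh h) p)" for h
  have nnh: "Rh h x y \<ge> 0" if "x \<noteq> y" for h x y unfolding Rh_def using nn[OF that] by simp
  have irrh: "irreducible (Rh h)" for h
  proof -
    have "{(x, y). x \<noteq> y \<and> Rh h x y > 0} = {(x, y). x \<noteq> y \<and> W x y > 0}"
      unfolding Rh_def by (auto simp: zero_less_mult_iff)
    then show ?thesis using irr unfolding irreducible_def by simp
  qed
  have PS: "stationary_dist (Rh h) (P h)" for h
    unfolding P_def by (rule theI'[OF ex1[OF nnh irrh]])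
  have "Rh 0 = W" unfolding Rh_def by simp
  then have P0: "P 0 = \<rho>" using uniq[OF nn irr _ st] PS[of 0] by simp
  define G where "G h = (\<Sum>x\<in>UNIV. P h x * (\<Sum>y\<in>UNIV. W x y * (1 - exp (h * c x y)) * (M y - M x)))" for h
  have FG: "(\<Sum>x\<in>UNIV. P h x * gen W M x) = G h" for h
  proof -
    have g: "gen W M x = gen (Rh h) M x + (\<Sum>y\<in>UNIV. W x y * (1 - exp (h * c x y)) * (M y - M x))" for x
      unfolding gen_def Rh_def by (simp add: sum.distrib[symmetric] algebra_simps)
    have "(\<Sum>x\<in>UNIV. P h x * gen (Rh h) M x) = 0" by (rule gen_sum) (rule stat_bal[OF PS])
    then show ?thesis unfolding G_def g by (simp add: distrib_left sum.distrib)
  qed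
  have G0: "G 0 = 0" unfolding G_def by simp
  have Gq: "(G h - G 0) / (h - 0) = (\<Sum>x\<in>UNIV. P h x * (\<Sum>y\<in>UNIV. W x y * ((1 - exp (h * c x y)) / h) * (M y - M x)))" for h
    unfolding G0 G_def by (simp add: sum_divide_distrib sum_distrib_left)
  have Plim: "((\<lambda>h. P h x) \<longlongrightarrow> \<rho> x) (at 0)" for x
  proof (rule cont[OF nn irr st _ PS])
    fix x y
    have "((\<lambda>h. W x y * exp (h * c x y)) \<longlongrightarrow> W x y * exp (0 * c x y)) (at 0)"
      by (intro tendsto_intros)
    then show "((\<lambda>h. Rh h x y) \<longlongrightarrow> W x y) (at 0)" unfolding Rh_def by simp
  qed
  have "((\<lambda>h. (G h - G 0) / (h - 0)) \<longlongrightarrow> (\<Sum>x\<in>UNIV. \<rho> x * (\<Sum>y\<in>UNIV. W x y * (- c x y) * (M y - M x)))) (at 0)"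
    unfolding Gq by (intro tendsto_intros Plim exp_quot)
  then have "(G has_real_derivative (\<Sum>x\<in>UNIV. \<rho> x * (\<Sum>y\<in>UNIV. W x y * (- c x y) * (M y - M x)))) (at 0)"
    unfolding has_field_derivative_iff .
  moreover have "(\<lambda>h. \<Sum>x\<in>UNIV. (THE p. stationary_dist (\<lambda>x y. W x y * exp (h * c x y)) p) x * gen W M x) = G"
    using FG unfolding P_def Rh_def by (intro ext) simp
  ultimately show ?thesis by simp
qed

lemma value_eq:
  assumes st: "stationary_dist W \<rho>"
  shows "(\<Sum>x\<in>UNIV. \<rho> x * (\<Sum>y\<in>UNIV. W x y * (- (b * V y - a * V x)) * (M y - M x)))
     = b * (\<Sum>x\<in>UNIV. \<rho> x * (M x * gen W V x)) + a * (\<Sum>x\<in>UNIV. \<rho> x * (V x * gen W M x))"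
proof -
  have z: "(\<Sum>x\<in>UNIV. \<rho> x * gen W (\<lambda>x. V x * M x) x) = 0" by (rule gen_sum) (rule stat_bal[OF st])
  have pt: "\<rho> x * (\<Sum>y\<in>UNIV. W x y * (- (b * V y - a * V x)) * (M y - M x))
     = - b * (\<rho> x * gen W (\<lambda>x. V x * M x) x) + b * (\<rho> x * (M x * gen W V x)) + a * (\<rho> x * (V x * gen W M x))" for x
  proof -
    have "- b * (\<rho> x * gen W (\<lambda>x. V x * M x) x) + b * (\<rho> x * (M x * gen W V x)) + a * (\<rho> x * (V x * gen W M x))
      = (\<Sum>y\<in>UNIV. - b * (\<rho> x * (W x y * (V y * M y - V x * M x))) + b * (\<rho> x * (M x * (W x y * (V y - V x))))
            + a * (\<rho> x * (V x * (W x y * (M y - M x)))))"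
      unfolding gen_def by (simp add: sum.distrib sum_distrib_left sum_negf sum_subtractf)
    also have "\<dots> = \<rho> x * (\<Sum>y\<in>UNIV. W x y * (- (b * V y - a * V x)) * (M y - M x))"
      unfolding sum_distrib_left by (intro sum.cong) (auto simp: algebra_simps)
    finally show ?thesis by simp
  qed
  show ?thesis unfolding pt by (simp add: sum.distrib sum_subtractf sum_distrib_left[symmetric] z)
qed

theorem proposition2:
  fixes W :: "'k::finite \<Rightarrow> 'k \<Rightarrow> real"
    and \<rho> V M :: "'k \<Rightarrow> real" and a b :: real
  assumes nonneg: "\<And>x y. x \<noteq> y \<Longrightarrow> W x y \<ge> 0"
    and irr: "irreducible W"
    and stat: "stationary_dist W \<rho>"
  shows "((\<lambda>h. \<Sum>x\<in>UNIV. (THE p. stationary_dist (\<lambda>x y. W x y * exp (h * (b * V y - a * V x))) p) x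
                      * gen W M x)
           has_real_derivative (b * (\<Sum>x\<in>UNIV. \<rho> x * (M x * gen W V x)) + a * (\<Sum>x\<in>UNIV. \<rho> x * (V x * gen W M x))))
          (at 0)
      \<and> ((\<lambda>h. \<Sum>x\<in>UNIV. (THE p. stationary_dist (\<lambda>x y. W x y * exp (h * (a * M y - b * M x))) p) x
                      * gen W V x)
           has_real_derivative (b * (\<Sum>x\<in>UNIV. \<rho> x * (M x * gen W V x)) + a * (\<Sum>x\<in>UNIV. \<rho> x * (V x * gen W M x))))
          (at 0)"
proof
  show "((\<lambda>h. \<Sum>x\<in>UNIV. (THE p. stationary_dist (\<lambda>x y. W x y * exp (h * (b * V y - a * V x))) p) x
                      * gen W M x)
           has_real_derivative (b * (\<Sum>x\<in>UNIV. \<rho> x * (M x * gen W V x)) + a * (\<Sum>x\<in>UNIV. \<rho> x * (V x * gen W M x))))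
          (at 0)"
    using main[OF nonneg irr stat, of "\<lambda>x y. b * V y - a * V x" M]
    unfolding value_eq[OF stat, of b V a M] .
  have "((\<lambda>h. \<Sum>x\<in>UNIV. (THE p. stationary_dist (\<lambda>x y. W x y * exp (h * (a * M y - b * M x))) p) x
                      * gen W V x)
           has_real_derivative (a * (\<Sum>x\<in>UNIV. \<rho> x * (V x * gen W M x)) + b * (\<Sum>x\<in>UNIV. \<rho> x * (M x * gen W V x))))
          (at 0)"
    using main[OF nonneg irr stat, of "\<lambda>x y. a * M y - b * M x" V]
    unfolding value_eq[OF stat, of a M b V] .
  then show "((\<lambda>h. \<Sum>x\<in>UNIV. (THE p. stationary_dist (\<lambda>x y. W x y * exp (h * (a * M y - b * M x))) p) x
                      * gen W V x)
           has_real_derivative (b * (\<Sum>x\<in>UNIV. \<rho> x * (M x * gen W V x)) + a * (\<Sum>x\<in>UNIV. \<rho> x * (V x * gen W M x))))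
          (at 0)" by (simp add: add.commute)
qed

end
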